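(* Let $r_0\ge 1$. Suppose that for every $\epsilon>0$ there is a constant $c(\epsilon)$ such that for every finite field $F$ of odd characteristic in which $-1$ is not a square and every $g:F^3\to\mathbb{C}$ with $g\sim 1$ on its support, $$\|\widehat{g}\|_{L^2(P,d\sigma)} \le c(\epsilon)\,|F|^{\epsilon}\,\|g\|_{L^{r_0}(F^3)}.$$ Then for every $1\le r<r_0$ there is a constant $C_r$ such that for every such field $F$ and every $g:F^3\to\mathbb{C}$ (arbitrary), $$\|\widehat{g}\|_{L^2(P,d\sigma)} \le C_r\,\|g\|_{L^{r}(F^3)}.$$
   Context: $F$ is a finite field of odd characteristic, $e:(F,+)\to\mathbb{C}^\times$ a fixed nontrivial additive character, $x\cdot y=\sum_i x_iy_i$ on $F^d$. $P=\{(\underline{x},\underline{x}\cdot\underline{x}):\underline{x}\in F^2\}\subseteq F^3$. For $g:F^3\to\mathbb{C}$, $\widehat{g}(\xi)=\sum_{x\in F^3}g(x)e(-x\cdot\xi)$ and $\|\widehat{g}\|_{L^2(P,d\sigma)}=\big(|F|^{-2}\sum_{\xi\in P}|\widehat{g}(\xi)|^2\big)^{1/2}$. $\|g\|_{L^{r}(F^3)}=\big(\sum_{x\in F^3}|g(x)|^{r}\big)^{1/r}$. "$g\sim 1$ on its support $G$" means $G=\{x:g(x)\neq 0\}$ and $\tfrac12\le|g(x)|\le 2$ for all $x\in G$. The constants $c(\epsilon)$, $C_r$ are independent of $F$ and $g$. *)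

theory Defs
  imports "HOL-Analysis.Analysis" "HOL-Algebra.Ring" "HOL-Algebra.QuotRing"
begin

text \<open>Finite fields are represented as HOL-Algebra field structures whose carrier
is a (finite) set of natural numbers; every finite field is isomorphic to one.\<close>

definition odd_char_field_no_sqrt_m1 :: "nat ring \<Rightarrow> bool" where
  "odd_char_field_no_sqrt_m1 R \<longleftrightarrow>
     field R \<and> finite (carrier R) \<and> \<one>\<^bsub>R\<^esub> \<oplus>\<^bsub>R\<^esub> \<one>\<^bsub>R\<^esub> \<noteq> \<zero>\<^bsub>R\<^esub> \<and>
     \<not> (\<exists>x\<in>carrier R. x \<otimes>\<^bsub>R\<^esub> x = \<ominus>\<^bsub>R\<^esub> \<one>\<^bsub>R\<^esub>)"

definition nontriv_add_char :: "nat ring \<Rightarrow> (nat \<Rightarrow> complex) \<Rightarrow> bool" where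
  "nontriv_add_char R e \<longleftrightarrow>
     (\<forall>a\<in>carrier R. \<forall>b\<in>carrier R. e (a \<oplus>\<^bsub>R\<^esub> b) = e a * e b) \<and>
     (\<exists>a\<in>carrier R. e a \<noteq> 1)"

definition cube :: "nat ring \<Rightarrow> (nat \<times> nat \<times> nat) set" where
  "cube R = carrier R \<times> carrier R \<times> carrier R"

definition dot3 :: "nat ring \<Rightarrow> nat \<times> nat \<times> nat \<Rightarrow> nat \<times> nat \<times> nat \<Rightarrow> nat" where
  "dot3 R x y = (case x of (x1, x2, x3) \<Rightarrow> case y of (y1, y2, y3) \<Rightarrow>
      (x1 \<otimes>\<^bsub>R\<^esub> y1) \<oplus>\<^bsub>R\<^esub> (x2 \<otimes>\<^bsub>R\<^esub> y2) \<oplus>\<^bsub>R\<^esub> (x3 \<otimes>\<^bsub>R\<^esub> y3))"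

definition parab :: "nat ring \<Rightarrow> (nat \<times> nat \<times> nat) set" where
  "parab R = {(x1, x2, (x1 \<otimes>\<^bsub>R\<^esub> x1) \<oplus>\<^bsub>R\<^esub> (x2 \<otimes>\<^bsub>R\<^esub> x2)) | x1 x2.
                x1 \<in> carrier R \<and> x2 \<in> carrier R}"

definition fourier :: "nat ring \<Rightarrow> (nat \<Rightarrow> complex) \<Rightarrow> (nat \<times> nat \<times> nat \<Rightarrow> complex)
                        \<Rightarrow> nat \<times> nat \<times> nat \<Rightarrow> complex" where
  "fourier R e g \<xi> = (\<Sum>x\<in>cube R. g x * e (\<ominus>\<^bsub>R\<^esub> dot3 R x \<xi>))"

definition L2P_norm :: "nat ring \<Rightarrow> (nat \<Rightarrow> complex) \<Rightarrow> (nat \<times> nat \<times> nat \<Rightarrow> complex) \<Rightarrow> real" where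
  "L2P_norm R e g = sqrt (
      (1 / (real (card (carrier R)))\<^sup>2) * (\<Sum>\<xi>\<in>parab R. (cmod (fourier R e g \<xi>))\<^sup>2))"

definition Lr_norm :: "nat ring \<Rightarrow> real \<Rightarrow> (nat \<times> nat \<times> nat \<Rightarrow> complex) \<Rightarrow> real" where
  "Lr_norm R r g = (\<Sum>x\<in>cube R. cmod (g x) powr r) powr (1 / r)"

definition sim_one :: "nat ring \<Rightarrow> (nat \<times> nat \<times> nat \<Rightarrow> complex) \<Rightarrow> bool" where
  "sim_one R g \<longleftrightarrow> (\<forall>x\<in>cube R. g x \<noteq> 0 \<longrightarrow> 1/2 \<le> cmod (g x) \<and> cmod (g x) \<le> 2)"

end

theory Submission
  imports Defs
begin

lemma L2_set_sum_le:
  assumes "finite J" "\<And>j x. 0 \<le> f j x"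
  shows "L2_set (\<lambda>x. \<Sum>j\<in>J. f j x) A \<le> (\<Sum>j\<in>J. L2_set (f j) A)"
  using assms(1)
proof (induction J rule: finite_induct)
  case empty thus ?case by (simp add: L2_set_def)
next
  case (insert j J)
  have "L2_set (\<lambda>x. \<Sum>j\<in>insert j J. f j x) A = L2_set (\<lambda>x. f j x + (\<Sum>j\<in>J. f j x)) A"
    using insert by simp
  also have "\<dots> \<le> L2_set (f j) A + L2_set (\<lambda>x. \<Sum>j\<in>J. f j x) A"
    by (rule L2_set_triangle_ineq)
  also have "\<dots> \<le> L2_set (f j) A + (\<Sum>j\<in>J. L2_set (f j) A)" using insert by simp
  finally show ?case using insert by simp
qed

lemma L2P_alt: "L2P_norm R e g = L2_set (\<lambda>\<xi>. cmod (fourier R e g \<xi>)) (parab R) / real (card (carrier R))"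
  unfolding L2P_norm_def L2_set_def by (simp add: real_sqrt_mult real_sqrt_divide)

lemma L2P_nonneg: "0 \<le> L2P_norm R e g"
  unfolding L2P_norm_def by (simp add: sum_nonneg)

lemma fourier_cong: "(\<And>x. x \<in> cube R \<Longrightarrow> g x = g' x) \<Longrightarrow> fourier R e g = fourier R e g'"
  unfolding fourier_def by (intro ext sum.cong) auto

lemma L2P_cong: "(\<And>x. x \<in> cube R \<Longrightarrow> g x = g' x) \<Longrightarrow> L2P_norm R e g = L2P_norm R e g'"
  unfolding L2P_norm_def using fourier_cong[of R g g' e] by simp

lemma fourier_lin: "fourier R e (\<lambda>x. \<Sum>j\<in>J. c j * h j x) \<xi> = (\<Sum>j\<in>J. c j * fourier R e (h j) \<xi>)"
  unfolding fourier_def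
  by (simp add: sum_distrib_right sum_distrib_left mult.assoc) (rule sum.swap)

lemma L2P_sum:
  assumes "finite J"
  shows "L2P_norm R e (\<lambda>x. \<Sum>j\<in>J. c j * h j x) \<le> (\<Sum>j\<in>J. cmod (c j) * L2P_norm R e (h j))"
proof -
  have "L2_set (\<lambda>\<xi>. cmod (fourier R e (\<lambda>x. \<Sum>j\<in>J. c j * h j x) \<xi>)) (parab R)
      \<le> L2_set (\<lambda>\<xi>. \<Sum>j\<in>J. cmod (c j) * cmod (fourier R e (h j) \<xi>)) (parab R)"
    unfolding fourier_lin
    by (intro L2_set_mono) (auto intro!: order_trans[OF norm_sum] simp: norm_mult)
  also have "\<dots> \<le> (\<Sum>j\<in>J. L2_set (\<lambda>\<xi>. cmod (c j) * cmod (fourier R e (h j) \<xi>)) (parab R))"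
    by (rule L2_set_sum_le[OF assms]) simp
  also have "\<dots> = (\<Sum>j\<in>J. cmod (c j) * L2_set (\<lambda>\<xi>. cmod (fourier R e (h j) \<xi>)) (parab R))"
    by (simp add: L2_set_right_distrib)
  finally have "L2_set (\<lambda>\<xi>. cmod (fourier R e (\<lambda>x. \<Sum>j\<in>J. c j * h j x) \<xi>)) (parab R) / real (card (carrier R))
     \<le> (\<Sum>j\<in>J. cmod (c j) * L2_set (\<lambda>\<xi>. cmod (fourier R e (h j) \<xi>)) (parab R)) / real (card (carrier R))"
    by (rule divide_right_mono) simp
  thus ?thesis unfolding L2P_alt sum_divide_distrib by simp
qed

lemma Lr_nonneg: "0 \<le> Lr_norm R r g"
  unfolding Lr_norm_def by simp

lemma Lr_pow: assumes "r > 0" shows "Lr_norm R r g powr r = (\<Sum>x\<in>cube R. cmod (g x) powr r)"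
proof -
  have "0 \<le> (\<Sum>x\<in>cube R. cmod (g x) powr r)" by (simp add: sum_nonneg)
  thus ?thesis unfolding Lr_norm_def using assms by (simp add: powr_powr)
qed

lemma Lr_pt: assumes "r > 0" "finite (cube R)" "x \<in> cube R" shows "cmod (g x) \<le> Lr_norm R r g"
proof -
  have "cmod (g x) powr r \<le> (\<Sum>x\<in>cube R. cmod (g x) powr r)"
    using assms by (intro member_le_sum) auto
  hence "(cmod (g x) powr r) powr (1/r) \<le> (\<Sum>x\<in>cube R. cmod (g x) powr r) powr (1/r)"
    using assms by (intro powr_mono2) auto
  thus ?thesis unfolding Lr_norm_def using assms by (simp add: powr_powr)
qed

lemma L2P_zero_fun: "(\<And>x. x \<in> cube R \<Longrightarrow> g x = 0) \<Longrightarrow> L2P_norm R e g = 0"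
proof -
  assume "\<And>x. x \<in> cube R \<Longrightarrow> g x = 0"
  hence "L2P_norm R e g = L2P_norm R e (\<lambda>_. 0)" by (intro L2P_cong) auto
  also have "\<dots> = 0" unfolding L2P_norm_def fourier_def by simp
  finally show ?thesis .
qed

lemma L2P_zero_char:
  assumes "field R" "\<And>a b. a \<in> carrier R \<Longrightarrow> b \<in> carrier R \<Longrightarrow> e (a \<oplus>\<^bsub>R\<^esub> b) = e a * e b"
    "e \<zero>\<^bsub>R\<^esub> = 0"
  shows "L2P_norm R e g = 0"
proof -
  interpret field R by fact
  have ez: "e a = 0" if "a \<in> carrier R" for a
    using assms(2)[OF that zero_closed] assms(3) that by simp
  have "fourier R e g \<xi> = 0" if "\<xi> \<in> parab R" for \<xi>
  proof -
    have "\<xi> \<in> cube R" using that unfolding parab_def cube_def by auto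
    hence "\<And>x. x \<in> cube R \<Longrightarrow> \<ominus>\<^bsub>R\<^esub> dot3 R x \<xi> \<in> carrier R"
      unfolding cube_def dot3_def by (auto split: prod.splits)
    thus ?thesis unfolding fourier_def by (simp add: ez)
  qed
  thus ?thesis unfolding L2P_norm_def by simp
qed

lemma sum_if_card: "finite A \<Longrightarrow> (\<Sum>x\<in>A. if P x then k else 0) = k * real (card {x\<in>A. P x})"
  by (simp add: sum.inter_filter[symmetric])

locale fchar = field R for R :: "nat ring" (structure) +
  fixes e :: "nat \<Rightarrow> complex"
  assumes fin: "finite (carrier R)"
  and two: "\<one>\<^bsub>R\<^esub> \<oplus>\<^bsub>R\<^esub> \<one>\<^bsub>R\<^esub> \<noteq> \<zero>\<^bsub>R\<^esub>"
  and hom: "\<And>a b. a \<in> carrier R \<Longrightarrow> b \<in> carrier R \<Longrightarrow> e (a \<oplus>\<^bsub>R\<^esub> b) = e a * e b"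
  and e0: "e \<zero>\<^bsub>R\<^esub> = 1"
  and nontriv: "\<exists>a\<in>carrier R. e a \<noteq> 1"
begin

abbreviation "N \<equiv> card (carrier R)"

lemma N_pos: "N > 0"
  using fin one_closed card_gt_0_iff by blast

lemma bij_add: "b \<in> carrier R \<Longrightarrow> bij_betw (\<lambda>x. x \<oplus> b) (carrier R) (carrier R)"
  apply (rule bij_betw_byWitness[where f' = "\<lambda>x. x \<ominus> b"])
  subgoal by (simp add: a_minus_def add.m_assoc r_neg l_neg)
  subgoal by (simp add: a_minus_def add.m_assoc r_neg l_neg)
  subgoal by auto
  subgoal by (auto simp: a_minus_def)
  done

lemma e_inv: "a \<in> carrier R \<Longrightarrow> e a * e (\<ominus> a) = 1"
proof -
  assume a: "a \<in> carrier R"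
  have "e (a \<oplus> \<ominus> a) = e a * e (\<ominus> a)" using a by (intro hom) auto
  moreover have "a \<oplus> \<ominus> a = \<zero>" using a by (rule r_neg)
  ultimately show ?thesis using e0 by simp
qed

lemma e_nz: "a \<in> carrier R \<Longrightarrow> e a \<noteq> 0"
  using e_inv by force

lemma e_pow: assumes a: "a \<in> carrier R" shows "e a ^ N = 1"
proof -
  define P where "P = (\<Prod>x\<in>carrier R. e x)"
  have "(\<Prod>x\<in>carrier R. e (x \<oplus> a)) = P"
    unfolding P_def using prod.reindex_bij_betw[OF bij_add[OF a], of e] by simp
  moreover have "(\<Prod>x\<in>carrier R. e (x \<oplus> a)) = (\<Prod>x\<in>carrier R. e x * e a)"
    using a by (intro prod.cong) (auto simp: hom)
  moreover have "(\<Prod>x\<in>carrier R. e x * e a) = P * e a ^ N"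
    unfolding P_def by (simp add: prod.distrib)
  moreover have "P \<noteq> 0" unfolding P_def using e_nz fin by auto
  ultimately have "P * e a ^ N = P * 1" by simp
  thus ?thesis using \<open>P \<noteq> 0\<close> by simp
qed

lemma e_norm: assumes a: "a \<in> carrier R" shows "cmod (e a) = 1"
proof -
  have "cmod (e a) ^ N = 1 ^ N" using e_pow[OF a] by (simp add: norm_power[symmetric])
  thus ?thesis using N_pos power_eq_imp_eq_base[of "cmod (e a)" N 1] by simp
qed

lemma e_cnj: assumes a: "a \<in> carrier R" shows "cnj (e a) = e (\<ominus> a)"
proof -
  have "e a * cnj (e a) = of_real ((cmod (e a))\<^sup>2)" by (rule complex_norm_square[symmetric])
  also have "\<dots> = 1" using e_norm[OF a] by simp
  finally have "e a * cnj (e a) = e a * e (\<ominus> a)" using e_inv[OF a] by simp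
  thus ?thesis using e_nz[OF a] by simp
qed

lemma char_sum: assumes c: "c \<in> carrier R" "c \<noteq> \<zero>"
  shows "(\<Sum>x\<in>carrier R. e (c \<otimes> x)) = 0"
proof -
  obtain a where a: "a \<in> carrier R" "e a \<noteq> 1" using nontriv by blast
  define b where "b = inv c \<otimes> a"
  have cinv: "inv c \<in> carrier R" "c \<otimes> inv c = \<one>" using c field_Units by auto
  have b: "b \<in> carrier R" using cinv a b_def by simp
  have "(\<Sum>x\<in>carrier R. e (c \<otimes> x)) = (\<Sum>x\<in>carrier R. e (c \<otimes> (x \<oplus> b)))"
    using sum.reindex_bij_betw[OF bij_add[OF b], of "\<lambda>x. e (c \<otimes> x)"] by simp
  also have "\<dots> = (\<Sum>x\<in>carrier R. e (c \<otimes> x) * e a)"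
  proof (rule sum.cong[OF refl])
    fix x assume x: "x \<in> carrier R"
    have "c \<otimes> (x \<oplus> b) = c \<otimes> x \<oplus> (c \<otimes> inv c) \<otimes> a"
    proof -
      have "c \<otimes> (inv c \<otimes> a) = (c \<otimes> inv c) \<otimes> a" using c cinv a by (intro m_assoc[symmetric]) auto
      thus ?thesis using x c cinv a b_def by (simp add: r_distr)
    qed
    thus "e (c \<otimes> (x \<oplus> b)) = e (c \<otimes> x) * e a" using cinv x c a by (simp add: hom)
  qed
  also have "\<dots> = (\<Sum>x\<in>carrier R. e (c \<otimes> x)) * e a" by (simp add: sum_distrib_right)
  finally show ?thesis using a(2) by (simp add: mult_cancel_left2 mult.commute)
qed


definition T :: "nat \<Rightarrow> nat \<Rightarrow> complex" where
  "T \<alpha> \<beta> = (\<Sum>u\<in>carrier R. e (\<alpha> \<otimes> u \<otimes> u \<oplus> \<beta> \<otimes> u))"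

lemma T_zero: assumes "\<beta> \<in> carrier R" "\<beta> \<noteq> \<zero>" shows "T \<zero> \<beta> = 0"
proof -
  have "T \<zero> \<beta> = (\<Sum>u\<in>carrier R. e (\<beta> \<otimes> u))"
    unfolding T_def using assms by (intro sum.cong) auto
  thus ?thesis using char_sum assms by simp
qed

lemma ring_id1:
  assumes "\<alpha> \<in> carrier R" "\<beta> \<in> carrier R" "h \<in> carrier R" "v \<in> carrier R"
  shows "\<alpha> \<otimes> (h \<oplus> v) \<otimes> (h \<oplus> v) \<oplus> \<beta> \<otimes> (h \<oplus> v) \<oplus> \<ominus> (\<alpha> \<otimes> v \<otimes> v \<oplus> \<beta> \<otimes> v)
     = (\<alpha> \<otimes> h \<otimes> h \<oplus> \<beta> \<otimes> h) \<oplus> (\<alpha> \<otimes> (\<one> \<oplus> \<one>) \<otimes> h) \<otimes> v"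
  using assms by algebra

lemma sum_char_if: assumes "c \<in> carrier R"
  shows "(\<Sum>v\<in>carrier R. e (c \<otimes> v)) = (if c = \<zero> then of_nat N else 0)"
proof (cases "c = \<zero>")
  case True
  have "(\<Sum>v\<in>carrier R. e (c \<otimes> v)) = (\<Sum>v\<in>carrier R. 1)"
    using True e0 by (intro sum.cong) auto
  thus ?thesis using True by simp
qed (use char_sum assms in auto)

lemma T_sq: assumes a: "\<alpha> \<in> carrier R" "\<alpha> \<noteq> \<zero>" and b: "\<beta> \<in> carrier R"
  shows "T \<alpha> \<beta> * cnj (T \<alpha> \<beta>) = of_nat N"
proof -
  define f where "f u = \<alpha> \<otimes> u \<otimes> u \<oplus> \<beta> \<otimes> u" for u
  define A where "A h = \<alpha> \<otimes> h \<otimes> h \<oplus> \<beta> \<otimes> h" for h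
  define c where "c h = \<alpha> \<otimes> (\<one> \<oplus> \<one>) \<otimes> h" for h
  have fC: "f u \<in> carrier R" if "u \<in> carrier R" for u using that a b f_def by simp
  have AC: "A u \<in> carrier R" if "u \<in> carrier R" for u using that a b A_def by simp
  have cC: "c u \<in> carrier R" if "u \<in> carrier R" for u using that a b c_def by simp
  have "T \<alpha> \<beta> * cnj (T \<alpha> \<beta>) = (\<Sum>u\<in>carrier R. \<Sum>v\<in>carrier R. e (f u) * e (\<ominus> f v))"
    unfolding T_def f_def[symmetric] by (simp add: sum_product cnj_sum e_cnj fC)
  also have "\<dots> = (\<Sum>v\<in>carrier R. \<Sum>u\<in>carrier R. e (f u) * e (\<ominus> f v))"
    by (rule sum.swap)
  also have "\<dots> = (\<Sum>v\<in>carrier R. \<Sum>h\<in>carrier R. e (A h) * e (c h \<otimes> v))"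
  proof (rule sum.cong[OF refl])
    fix v assume v: "v \<in> carrier R"
    have "(\<Sum>u\<in>carrier R. e (f u) * e (\<ominus> f v)) = (\<Sum>h\<in>carrier R. e (f (h \<oplus> v)) * e (\<ominus> f v))"
      using sum.reindex_bij_betw[OF bij_add[OF v], of "\<lambda>u. e (f u) * e (\<ominus> f v)"] by simp
    also have "\<dots> = (\<Sum>h\<in>carrier R. e (A h) * e (c h \<otimes> v))"
    proof (rule sum.cong[OF refl])
      fix h assume h: "h \<in> carrier R"
      have "e (f (h \<oplus> v)) * e (\<ominus> f v) = e (f (h \<oplus> v) \<oplus> \<ominus> f v)"
        using h v fC by (simp add: hom)
      also have "f (h \<oplus> v) \<oplus> \<ominus> f v = A h \<oplus> c h \<otimes> v"
        unfolding f_def A_def c_def using ring_id1[OF a(1) b h v] .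
      also have "e (A h \<oplus> c h \<otimes> v) = e (A h) * e (c h \<otimes> v)"
        using h v AC cC by (simp add: hom)
      finally show "e (f (h \<oplus> v)) * e (\<ominus> f v) = e (A h) * e (c h \<otimes> v)" .
    qed
    finally show "(\<Sum>u\<in>carrier R. e (f u) * e (\<ominus> f v)) = (\<Sum>h\<in>carrier R. e (A h) * e (c h \<otimes> v))" .
  qed
  also have "\<dots> = (\<Sum>h\<in>carrier R. e (A h) * (\<Sum>v\<in>carrier R. e (c h \<otimes> v)))"
    by (subst sum.swap) (simp add: sum_distrib_left)
  also have "\<dots> = (\<Sum>h\<in>carrier R. if h = \<zero> then of_nat N else 0)"
  proof (rule sum.cong[OF refl])
    fix h assume h: "h \<in> carrier R"
    have two': "\<one> \<oplus> \<one> \<in> carrier R" by simp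
    have "c h = \<zero> \<longleftrightarrow> h = \<zero>"
      using h a two two' unfolding c_def by (simp add: integral_iff)
    moreover have "A \<zero> = \<zero>" unfolding A_def using a b by simp
    ultimately show "e (A h) * (\<Sum>v\<in>carrier R. e (c h \<otimes> v)) = (if h = \<zero> then of_nat N else 0)"
      using sum_char_if[OF cC[OF h]] e0 by auto
  qed
  also have "\<dots> = of_nat N" using fin by simp
  finally show ?thesis .
qed

lemma T_norm_sq: assumes a: "\<alpha> \<in> carrier R" "\<alpha> \<noteq> \<zero>" and b: "\<beta> \<in> carrier R"
  shows "(cmod (T \<alpha> \<beta>))\<^sup>2 = real N"
proof -
  have "complex_of_real ((cmod (T \<alpha> \<beta>))\<^sup>2) = of_nat N"
    using T_sq[OF a b] complex_norm_square[of "T \<alpha> \<beta>"] by simp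
  thus ?thesis by (metis of_real_of_nat_eq of_real_eq_iff)
qed


lemma diff0: assumes "a \<in> carrier R" "b \<in> carrier R" shows "a \<ominus> b = \<zero> \<longleftrightarrow> a = b"
proof
  assume h: "a \<ominus> b = \<zero>"
  have "a = (a \<ominus> b) \<oplus> b" using assms by algebra
  thus "a = b" using h assms by simp
next
  assume "a = b" thus "a \<ominus> b = \<zero>" using assms by (simp add: minus_eq r_neg)
qed

lemma neg0: assumes "a \<in> carrier R" shows "\<ominus> a = \<zero> \<longleftrightarrow> a = \<zero>"
  using diff0[OF zero_closed assms] assms by (simp add: minus_eq)

lemma dot3_simp: "dot3 R (x1, x2, x3) (y1, y2, y3) = x1 \<otimes> y1 \<oplus> x2 \<otimes> y2 \<oplus> x3 \<otimes> y3"
  unfolding dot3_def by simp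

lemma parab_eq: "parab R = (\<lambda>(u1, u2). (u1, u2, u1 \<otimes> u1 \<oplus> u2 \<otimes> u2)) ` (carrier R \<times> carrier R)"
  unfolding parab_def by auto

lemma parab_sum: "(\<Sum>\<xi>\<in>parab R. \<phi> \<xi>) = (\<Sum>u1\<in>carrier R. \<Sum>u2\<in>carrier R. \<phi> (u1, u2, u1 \<otimes> u1 \<oplus> u2 \<otimes> u2))"
proof -
  have inj: "inj_on (\<lambda>(u1, u2). (u1, u2, u1 \<otimes> u1 \<oplus> u2 \<otimes> u2)) (carrier R \<times> carrier R)"
    by (auto simp: inj_on_def)
  have "(\<Sum>\<xi>\<in>parab R. \<phi> \<xi>) = (\<Sum>x\<in>carrier R \<times> carrier R. \<phi> ((\<lambda>(u1, u2). (u1, u2, u1 \<otimes> u1 \<oplus> u2 \<otimes> u2)) x))"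
    unfolding parab_eq using sum.reindex[OF inj, of \<phi>] by (simp add: comp_def)
  also have "\<dots> = (\<Sum>(u1,u2)\<in>carrier R \<times> carrier R. \<phi> (u1, u2, u1 \<otimes> u1 \<oplus> u2 \<otimes> u2))"
    by (intro sum.cong) auto
  also have "\<dots> = (\<Sum>u1\<in>carrier R. \<Sum>u2\<in>carrier R. \<phi> (u1, u2, u1 \<otimes> u1 \<oplus> u2 \<otimes> u2))"
    by (rule sum.cartesian_product[symmetric])
  finally show ?thesis .
qed

lemma card_parab: "card (parab R) = N * N"
  using parab_sum[of "\<lambda>_. (1::nat)"] by simp

lemma parab_sub: "parab R \<subseteq> cube R"
  unfolding parab_def cube_def by auto

lemma finite_parab: "finite (parab R)" unfolding parab_eq using fin by simp

lemma finite_cube: "finite (cube R)" unfolding cube_def using fin by simp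

definition S :: "nat \<times> nat \<times> nat \<Rightarrow> complex" where
  "S z = (\<Sum>\<xi>\<in>parab R. e (\<ominus> dot3 R z \<xi>))"

lemma ring_id2:
  assumes "z1 \<in> carrier R" "z2 \<in> carrier R" "z3 \<in> carrier R" "u1 \<in> carrier R" "u2 \<in> carrier R"
  shows "\<ominus> (z1 \<otimes> u1 \<oplus> z2 \<otimes> u2 \<oplus> z3 \<otimes> (u1 \<otimes> u1 \<oplus> u2 \<otimes> u2)) =
    ((\<ominus> z3) \<otimes> u1 \<otimes> u1 \<oplus> (\<ominus> z1) \<otimes> u1) \<oplus> ((\<ominus> z3) \<otimes> u2 \<otimes> u2 \<oplus> (\<ominus> z2) \<otimes> u2)"
  using assms by algebra

lemma S_prod: assumes "z1 \<in> carrier R" "z2 \<in> carrier R" "z3 \<in> carrier R"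
  shows "S (z1, z2, z3) = T (\<ominus> z3) (\<ominus> z1) * T (\<ominus> z3) (\<ominus> z2)"
proof -
  have "S (z1, z2, z3) = (\<Sum>u1\<in>carrier R. \<Sum>u2\<in>carrier R.
      e ((\<ominus> z3) \<otimes> u1 \<otimes> u1 \<oplus> (\<ominus> z1) \<otimes> u1) * e ((\<ominus> z3) \<otimes> u2 \<otimes> u2 \<oplus> (\<ominus> z2) \<otimes> u2))"
    unfolding S_def parab_sum dot3_simp
    using assms by (intro sum.cong refl) (simp add: ring_id2 hom)
  thus ?thesis unfolding T_def by (simp add: sum_product)
qed

lemma S_bound: assumes z: "z \<in> cube R" "z \<noteq> (\<zero>, \<zero>, \<zero>)" shows "cmod (S z) \<le> real N"
proof -
  obtain z1 z2 z3 where zz: "z = (z1, z2, z3)" by (cases z) auto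
  have c: "z1 \<in> carrier R" "z2 \<in> carrier R" "z3 \<in> carrier R" using z zz cube_def by auto
  show ?thesis
  proof (cases "z3 = \<zero>")
    case False
    hence n: "\<ominus> z3 \<noteq> \<zero>" using neg0 c by simp
    have "(cmod (S z))\<^sup>2 = (cmod (T (\<ominus> z3) (\<ominus> z1)))\<^sup>2 * (cmod (T (\<ominus> z3) (\<ominus> z2)))\<^sup>2"
      unfolding zz S_prod[OF c] by (simp add: norm_mult power_mult_distrib)
    also have "\<dots> = real N ^ 2" using T_norm_sq n c by (simp add: power2_eq_square)
    finally show ?thesis by (simp add: power2_eq_iff_nonneg)
  next
    case True
    hence "z1 \<noteq> \<zero> \<or> z2 \<noteq> \<zero>" using z zz by auto
    hence "T (\<ominus> z3) (\<ominus> z1) = 0 \<or> T (\<ominus> z3) (\<ominus> z2) = 0"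
      using T_zero neg0 c True by auto
    thus ?thesis unfolding zz S_prod[OF c] by auto
  qed
qed

lemma S_bound2: assumes z: "z \<in> cube R" shows "cmod (S z) \<le> real N * real N"
proof -
  have "cmod (S z) \<le> (\<Sum>\<xi>\<in>parab R. cmod (e (\<ominus> dot3 R z \<xi>)))" unfolding S_def by (rule norm_sum)
  also have "\<dots> = (\<Sum>\<xi>\<in>parab R. 1)"
  proof (rule sum.cong[OF refl])
    fix \<xi> assume "\<xi> \<in> parab R"
    hence "\<xi> \<in> cube R" using parab_sub by auto
    thus "cmod (e (\<ominus> dot3 R z \<xi>)) = 1" using z
      by (intro e_norm) (auto simp: cube_def dot3_def split: prod.splits)
  qed
  also have "\<dots> = real N * real N" using card_parab by simp
  finally show ?thesis .
qed


definition sub3 :: "nat \<times> nat \<times> nat \<Rightarrow> nat \<times> nat \<times> nat \<Rightarrow> nat \<times> nat \<times> nat" where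
  "sub3 x y = (case x of (x1, x2, x3) \<Rightarrow> case y of (y1, y2, y3) \<Rightarrow> (x1 \<ominus> y1, x2 \<ominus> y2, x3 \<ominus> y3))"

lemma sub3_cube: "x \<in> cube R \<Longrightarrow> y \<in> cube R \<Longrightarrow> sub3 x y \<in> cube R"
  unfolding sub3_def cube_def by (auto split: prod.splits)

lemma sub3_zero: assumes "x \<in> cube R" "y \<in> cube R" "sub3 x y = (\<zero>, \<zero>, \<zero>)" shows "x = y"
  using assms unfolding sub3_def cube_def by (auto split: prod.splits simp: diff0)

lemma ring_id3:
  assumes "x1 \<in> carrier R" "x2 \<in> carrier R" "x3 \<in> carrier R"
    "y1 \<in> carrier R" "y2 \<in> carrier R" "y3 \<in> carrier R"
    "z1 \<in> carrier R" "z2 \<in> carrier R" "z3 \<in> carrier R"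
  shows "\<ominus> (x1 \<otimes> z1 \<oplus> x2 \<otimes> z2 \<oplus> x3 \<otimes> z3) \<oplus> \<ominus> (\<ominus> (y1 \<otimes> z1 \<oplus> y2 \<otimes> z2 \<oplus> y3 \<otimes> z3))
    = \<ominus> ((x1 \<ominus> y1) \<otimes> z1 \<oplus> (x2 \<ominus> y2) \<otimes> z2 \<oplus> (x3 \<ominus> y3) \<otimes> z3)"
  using assms by algebra

lemma e_dot: assumes "x \<in> cube R" "y \<in> cube R" "\<xi> \<in> cube R"
  shows "e (\<ominus> dot3 R x \<xi>) * cnj (e (\<ominus> dot3 R y \<xi>)) = e (\<ominus> dot3 R (sub3 x y) \<xi>)"
proof -
  obtain x1 x2 x3 y1 y2 y3 z1 z2 z3 where t: "x = (x1,x2,x3)" "y = (y1,y2,y3)" "\<xi> = (z1,z2,z3)"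
    by (cases x, cases y, cases \<xi>) auto
  have c: "x1 \<in> carrier R" "x2 \<in> carrier R" "x3 \<in> carrier R"
    "y1 \<in> carrier R" "y2 \<in> carrier R" "y3 \<in> carrier R"
    "z1 \<in> carrier R" "z2 \<in> carrier R" "z3 \<in> carrier R" using assms t cube_def by auto
  define dx where "dx = x1 \<otimes> z1 \<oplus> x2 \<otimes> z2 \<oplus> x3 \<otimes> z3"
  define dy where "dy = y1 \<otimes> z1 \<oplus> y2 \<otimes> z2 \<oplus> y3 \<otimes> z3"
  have dc: "dx \<in> carrier R" "dy \<in> carrier R" using c dx_def dy_def by auto
  have "e (\<ominus> dx) * cnj (e (\<ominus> dy)) = e (\<ominus> dx) * e (\<ominus> (\<ominus> dy))"
    using dc by (simp only: e_cnj a_inv_closed)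
  also have "\<dots> = e (\<ominus> dx \<oplus> \<ominus> (\<ominus> dy))" using dc by (simp only: hom a_inv_closed)
  also have "\<ominus> dx \<oplus> \<ominus> (\<ominus> dy) = \<ominus> dot3 R (sub3 x y) \<xi>"
    unfolding t sub3_def dx_def dy_def using ring_id3[OF c] by (simp add: dot3_simp)
  finally show ?thesis unfolding t dot3_simp dx_def dy_def .
qed

lemma sum_sq_expand:
  "complex_of_real (\<Sum>\<xi>\<in>parab R. (cmod (fourier R e g \<xi>))\<^sup>2) =
     (\<Sum>x\<in>cube R. \<Sum>y\<in>cube R. g x * cnj (g y) * S (sub3 x y))"
proof -
  have "complex_of_real (\<Sum>\<xi>\<in>parab R. (cmod (fourier R e g \<xi>))\<^sup>2) =
     (\<Sum>\<xi>\<in>parab R. fourier R e g \<xi> * cnj (fourier R e g \<xi>))"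
    unfolding of_real_sum by (intro sum.cong refl complex_norm_square)
  also have "\<dots> = (\<Sum>\<xi>\<in>parab R. \<Sum>x\<in>cube R. \<Sum>y\<in>cube R. g x * cnj (g y) * e (\<ominus> dot3 R (sub3 x y) \<xi>))"
  proof (rule sum.cong[OF refl])
    fix \<xi> assume "\<xi> \<in> parab R"
    hence \<xi>: "\<xi> \<in> cube R" using parab_sub by auto
    have "fourier R e g \<xi> * cnj (fourier R e g \<xi>) =
       (\<Sum>x\<in>cube R. \<Sum>y\<in>cube R. (g x * e (\<ominus> dot3 R x \<xi>)) * (cnj (g y) * cnj (e (\<ominus> dot3 R y \<xi>))))"
      unfolding fourier_def by (simp add: sum_product cnj_sum)
    also have "\<dots> = (\<Sum>x\<in>cube R. \<Sum>y\<in>cube R. g x * cnj (g y) * e (\<ominus> dot3 R (sub3 x y) \<xi>))"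
      using e_dot \<xi> by (intro sum.cong refl) (simp add: e_dot[symmetric] mult_ac)
    finally show "fourier R e g \<xi> * cnj (fourier R e g \<xi>) = \<dots>" .
  qed
  also have "\<dots> = (\<Sum>x\<in>cube R. \<Sum>\<xi>\<in>parab R. \<Sum>y\<in>cube R. g x * cnj (g y) * e (\<ominus> dot3 R (sub3 x y) \<xi>))"
    by (rule sum.swap)
  also have "\<dots> = (\<Sum>x\<in>cube R. \<Sum>y\<in>cube R. \<Sum>\<xi>\<in>parab R. g x * cnj (g y) * e (\<ominus> dot3 R (sub3 x y) \<xi>))"
    by (intro sum.cong refl sum.swap)
  also have "\<dots> = (\<Sum>x\<in>cube R. \<Sum>y\<in>cube R. g x * cnj (g y) * S (sub3 x y))"
    unfolding S_def by (simp add: sum_distrib_left)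
  finally show ?thesis .
qed

lemma sum_sq_bound:
  "(\<Sum>\<xi>\<in>parab R. (cmod (fourier R e g \<xi>))\<^sup>2) \<le>
     real N * real N * (\<Sum>x\<in>cube R. (cmod (g x))\<^sup>2) + real N * (\<Sum>x\<in>cube R. cmod (g x))\<^sup>2"
proof -
  have nn: "0 \<le> (\<Sum>\<xi>\<in>parab R. (cmod (fourier R e g \<xi>))\<^sup>2)" by (simp add: sum_nonneg)
  have "(\<Sum>\<xi>\<in>parab R. (cmod (fourier R e g \<xi>))\<^sup>2) =
      cmod (complex_of_real (\<Sum>\<xi>\<in>parab R. (cmod (fourier R e g \<xi>))\<^sup>2))"
    by (subst norm_of_real) (simp add: nn)
  also have "\<dots> = cmod (\<Sum>x\<in>cube R. \<Sum>y\<in>cube R. g x * cnj (g y) * S (sub3 x y))"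
    by (simp only: sum_sq_expand)
  also have "\<dots> \<le> (\<Sum>x\<in>cube R. cmod (\<Sum>y\<in>cube R. g x * cnj (g y) * S (sub3 x y)))"
    by (rule norm_sum)
  also have "\<dots> \<le> (\<Sum>x\<in>cube R. \<Sum>y\<in>cube R. cmod (g x) * cmod (g y) * (real N + (if x = y then real N * real N else 0)))"
  proof (rule sum_mono)
    fix x assume x: "x \<in> cube R"
    have "cmod (\<Sum>y\<in>cube R. g x * cnj (g y) * S (sub3 x y)) \<le> (\<Sum>y\<in>cube R. cmod (g x * cnj (g y) * S (sub3 x y)))"
      by (rule norm_sum)
    also have "\<dots> \<le> (\<Sum>y\<in>cube R. cmod (g x) * cmod (g y) * (real N + (if x = y then real N * real N else 0)))"
    proof (rule sum_mono)
      fix y assume y: "y \<in> cube R"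
      have "cmod (S (sub3 x y)) \<le> real N + (if x = y then real N * real N else 0)"
      proof (cases "x = y")
        case True thus ?thesis using S_bound2[OF sub3_cube[OF x y]] by simp
      next
        case False
        hence "sub3 x y \<noteq> (\<zero>, \<zero>, \<zero>)" using sub3_zero x y by blast
        thus ?thesis using S_bound[OF sub3_cube[OF x y]] False by simp
      qed
      thus "cmod (g x * cnj (g y) * S (sub3 x y)) \<le> cmod (g x) * cmod (g y) * (real N + (if x = y then real N * real N else 0))"
        by (simp add: norm_mult mult_left_mono)
    qed
    finally show "cmod (\<Sum>y\<in>cube R. g x * cnj (g y) * S (sub3 x y)) \<le> \<dots>" .
  qed
  also have "\<dots> = (\<Sum>x\<in>cube R. \<Sum>y\<in>cube R. real N * (cmod (g x) * cmod (g y))) +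
       (\<Sum>x\<in>cube R. \<Sum>y\<in>cube R. if x = y then real N * real N * (cmod (g x))\<^sup>2 else 0)"
    unfolding sum.distrib[symmetric] by (intro sum.cong refl) (auto simp: algebra_simps power2_eq_square)
  also have "\<dots> = real N * (\<Sum>x\<in>cube R. cmod (g x))\<^sup>2 + real N * real N * (\<Sum>x\<in>cube R. (cmod (g x))\<^sup>2)"
    using finite_cube by (simp add: sum_distrib_left[symmetric] power2_eq_square sum_product)
  finally show ?thesis by simp
qed

lemma L2P_sq_bound:
  "(L2P_norm R e g)\<^sup>2 \<le> (\<Sum>x\<in>cube R. (cmod (g x))\<^sup>2) + (\<Sum>x\<in>cube R. cmod (g x))\<^sup>2 / real N"
proof -
  have Np: "real N > 0" using N_pos by simp
  have nn: "0 \<le> (\<Sum>\<xi>\<in>parab R. (cmod (fourier R e g \<xi>))\<^sup>2)" by (simp add: sum_nonneg)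
  have "(L2P_norm R e g)\<^sup>2 = (\<Sum>\<xi>\<in>parab R. (cmod (fourier R e g \<xi>))\<^sup>2) / (real N * real N)"
    unfolding L2P_norm_def using nn by (simp add: power2_eq_square)
  also have "\<dots> \<le> (real N * real N * (\<Sum>x\<in>cube R. (cmod (g x))\<^sup>2) + real N * (\<Sum>x\<in>cube R. cmod (g x))\<^sup>2) / (real N * real N)"
    using sum_sq_bound Np by (intro divide_right_mono) auto
  also have "\<dots> = (\<Sum>x\<in>cube R. (cmod (g x))\<^sup>2) + (\<Sum>x\<in>cube R. cmod (g x))\<^sup>2 / real N"
    using Np by (simp add: field_simps)
  finally show ?thesis .
qed


lemma restricted_bound:
  assumes r1: "1 \<le> r1" "r1 \<le> 2" "r1 < r0"
  and H: "\<forall>h. sim_one R h \<longrightarrow> L2P_norm R e h \<le> c * real N powr (1/r1 - 1/r0) * Lr_norm R r0 h"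
  and h: "sim_one R h"
  shows "L2P_norm R e h \<le> max 3 (2 * \<bar>c\<bar>) * real (card {x\<in>cube R. h x \<noteq> 0}) powr (1/r1)"
proof -
  define M where "M = real (card {x\<in>cube R. h x \<noteq> 0})"
  have M0: "0 \<le> M" unfolding M_def by simp
  have hb: "cmod (h x) \<le> 2" if "x \<in> cube R" for x using h that unfolding sim_one_def by (cases "h x = 0") auto
  have s2: "(\<Sum>x\<in>cube R. (cmod (h x))\<^sup>2) \<le> 4 * M"
  proof -
    have "(\<Sum>x\<in>cube R. (cmod (h x))\<^sup>2) \<le> (\<Sum>x\<in>cube R. if h x \<noteq> 0 then 4 else 0)"
    proof (rule sum_mono)
      fix x assume x: "x \<in> cube R"
      have "(cmod (h x))\<^sup>2 \<le> 2\<^sup>2" using hb[OF x] by (intro power_mono) auto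
      thus "(cmod (h x))\<^sup>2 \<le> (if h x \<noteq> 0 then 4 else 0)" by auto
    qed
    thus ?thesis unfolding M_def using sum_if_card[OF finite_cube] by simp
  qed
  have s1: "(\<Sum>x\<in>cube R. cmod (h x)) \<le> 2 * M"
  proof -
    have "(\<Sum>x\<in>cube R. cmod (h x)) \<le> (\<Sum>x\<in>cube R. if h x \<noteq> 0 then 2 else 0)"
      using hb by (intro sum_mono) auto
    thus ?thesis unfolding M_def using sum_if_card[OF finite_cube] by simp
  qed
  have Np: "real N > 0" using N_pos by simp
  show ?thesis
  proof (cases "M \<le> real N")
    case True
    have "(L2P_norm R e h)\<^sup>2 \<le> 4 * M + (2 * M)\<^sup>2 / real N"
    proof -
      have "(\<Sum>x\<in>cube R. cmod (h x))\<^sup>2 \<le> (2 * M)\<^sup>2"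
        using s1 by (intro power_mono) (auto simp: sum_nonneg)
      hence "(\<Sum>x\<in>cube R. cmod (h x))\<^sup>2 / real N \<le> (2 * M)\<^sup>2 / real N"
        using Np by (intro divide_right_mono) auto
      thus ?thesis using L2P_sq_bound[of h] s2 by linarith
    qed
    also have "\<dots> \<le> 8 * M"
    proof -
      have "M * M \<le> M * real N" using True M0 by (intro mult_left_mono) auto
      hence "M * M / real N \<le> M" using Np by (simp add: divide_le_eq)
      thus ?thesis by (simp add: power2_eq_square)
    qed
    finally have sq: "(L2P_norm R e h)\<^sup>2 \<le> 8 * M" .
    show ?thesis
    proof (cases "M = 0")
      case True
      hence "L2P_norm R e h = 0" using sq L2P_nonneg[of R e h] by simp
      thus ?thesis by (simp add: M_def[symmetric] True)
    next
      case False
      hence M1: "M \<ge> 1" unfolding M_def by simp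
      have "L2P_norm R e h \<le> sqrt (8 * M)" using sq L2P_nonneg[of R e h] real_le_rsqrt by blast
      also have "\<dots> \<le> 3 * sqrt M"
      proof -
        have "sqrt (8 * M) = sqrt 8 * sqrt M" by (simp add: real_sqrt_mult)
        moreover have "sqrt 8 \<le> (3::real)" by (rule real_le_lsqrt) auto
        hence "sqrt 8 * sqrt M \<le> 3 * sqrt M" by (rule mult_right_mono) (auto simp: M0)
        ultimately show ?thesis by simp
      qed
      also have "\<dots> = 3 * M powr (1/2)" using M0 by (simp add: powr_half_sqrt)
      also have "\<dots> \<le> 3 * M powr (1/r1)"
        using M1 r1 by (intro mult_left_mono powr_mono) (auto simp: field_simps)
      also have "\<dots> \<le> max 3 (2 * \<bar>c\<bar>) * M powr (1/r1)"
        by (intro mult_right_mono) auto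
      finally show ?thesis unfolding M_def .
    qed
  next
    case False
    define \<epsilon> where "\<epsilon> = 1/r1 - 1/r0"
    have r0p: "r0 > 0" using r1 by simp
    have eps: "\<epsilon> > 0" unfolding \<epsilon>_def using r1 by (simp add: frac_less2)
    have Lr: "Lr_norm R r0 h \<le> 2 * M powr (1/r0)"
    proof -
      have "(\<Sum>x\<in>cube R. cmod (h x) powr r0) \<le> (\<Sum>x\<in>cube R. if h x \<noteq> 0 then 2 powr r0 else 0)"
      proof (rule sum_mono)
        fix x assume x: "x \<in> cube R"
        have "cmod (h x) powr r0 \<le> 2 powr r0" using hb[OF x] r0p by (intro powr_mono2) auto
        thus "cmod (h x) powr r0 \<le> (if h x \<noteq> 0 then 2 powr r0 else 0)" by auto
      qed
      also have "\<dots> = 2 powr r0 * M" unfolding M_def using sum_if_card[OF finite_cube] by simp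
      finally have "(\<Sum>x\<in>cube R. cmod (h x) powr r0) powr (1/r0) \<le> (2 powr r0 * M) powr (1/r0)"
        using r0p by (intro powr_mono2) (auto simp: sum_nonneg)
      also have "\<dots> = 2 * M powr (1/r0)" using r0p M0 by (simp add: powr_mult powr_powr)
      finally show ?thesis unfolding Lr_norm_def .
    qed
    have "L2P_norm R e h \<le> c * real N powr \<epsilon> * Lr_norm R r0 h" using H h \<epsilon>_def by blast
    also have "\<dots> \<le> \<bar>c\<bar> * real N powr \<epsilon> * Lr_norm R r0 h"
      by (intro mult_right_mono) (auto simp: Lr_nonneg)
    also have "\<dots> \<le> \<bar>c\<bar> * M powr \<epsilon> * (2 * M powr (1/r0))"
      using False eps Lr by (intro mult_mono powr_mono2) (auto simp: Lr_nonneg)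
    also have "\<dots> = 2 * \<bar>c\<bar> * M powr (\<epsilon> + 1/r0)" by (simp add: powr_add)
    also have "\<dots> = 2 * \<bar>c\<bar> * M powr (1/r1)" unfolding \<epsilon>_def by simp
    also have "\<dots> \<le> max 3 (2 * \<bar>c\<bar>) * M powr (1/r1)" by (intro mult_right_mono) auto
    finally show ?thesis unfolding M_def .
  qed
qed


lemma level_exists:
  assumes "0 < t" "(t::real) \<le> A"
  defines "n \<equiv> (LEAST n. A / 2 ^ Suc n < t)"
  shows "A / 2 ^ Suc n < t \<and> t \<le> A / 2 ^ n"
proof -
  have Ap: "A > 0" using assms by simp
  obtain m where m: "(1/2::real) ^ m < t / A" using real_arch_pow_inv[of "t / A" "1/2"] assms Ap by auto
  have "A / 2 ^ Suc m < t"
  proof -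
    have "A / 2 ^ Suc m \<le> A / 2 ^ m" using Ap by (intro divide_left_mono) auto
    also have "A / 2 ^ m = A * (1/2) ^ m" by (simp add: power_one_over)
    also have "\<dots> < A * (t / A)" using m Ap by (intro mult_strict_left_mono) auto
    also have "\<dots> = t" using Ap by simp
    finally show ?thesis .
  qed
  hence ex: "A / 2 ^ Suc n < t" unfolding n_def by (rule LeastI)
  have "t \<le> A / 2 ^ n"
  proof (cases n)
    case 0 thus ?thesis using assms by simp
  next
    case (Suc k)
    have "k < n" using Suc by simp
    hence "\<not> (A / 2 ^ Suc k < t)" unfolding n_def by (rule not_less_Least)
    thus ?thesis using Suc by simp
  qed
  with ex show ?thesis by simp
qed

lemma geo_bound: assumes "0 \<le> q" "q < (1::real)" "finite J"
  shows "(\<Sum>j\<in>J. q ^ j) \<le> 1 / (1 - q)"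
proof -
  have "(\<Sum>j\<in>J. q ^ j) \<le> (\<Sum>j. q ^ j)"
    using assms by (intro sum_le_suminf summable_geometric) auto
  also have "\<dots> = 1 / (1 - q)" using assms by (intro suminf_geometric) auto
  finally show ?thesis .
qed

lemma decomposition:
  assumes r: "1 \<le> r" "r < r1" and C0: "0 \<le> C0"
  and B: "\<And>h. sim_one R h \<Longrightarrow> L2P_norm R e h \<le> C0 * real (card {x\<in>cube R. h x \<noteq> 0}) powr (1/r1)"
  shows "L2P_norm R e g \<le> C0 * 2 powr (r/r1) / (1 - 2 powr (r/r1 - 1)) * Lr_norm R r g"
proof -
  define A where "A = Lr_norm R r g"
  define q where "q = (2::real) powr (r/r1 - 1)"
  have rp: "r > 0" "r1 > 0" using r by auto
  have "r / r1 < 1" using r by simp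
  hence q: "0 \<le> q" "q < 1" unfolding q_def by (auto intro!: powr_less_one)
  have gA: "cmod (g x) \<le> A" if "x \<in> cube R" for x
    unfolding A_def using Lr_pt[OF rp(1) finite_cube that] .
  show ?thesis
  proof (cases "A = 0")
    case True
    hence "L2P_norm R e g = 0" using gA by (intro L2P_zero_fun) (metis norm_le_zero_iff)
    thus ?thesis using True A_def by simp
  next
    case False
    hence Ap: "A > 0" using Lr_nonneg A_def by (metis less_eq_real_def)
    define lev where "lev x = (LEAST n. A / 2 ^ Suc n < cmod (g x))" for x
    have levp: "A / 2 ^ Suc (lev x) < cmod (g x) \<and> cmod (g x) \<le> A / 2 ^ (lev x)"
      if "x \<in> cube R" "g x \<noteq> 0" for x
      unfolding lev_def using level_exists[of "cmod (g x)" A] that gA by simp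
    define h where "h j x = (if x \<in> cube R \<and> g x \<noteq> 0 \<and> lev x = j then g x * of_real (2 ^ j / A) else 0)" for j x
    define G where "G j = {x\<in>cube R. g x \<noteq> 0 \<and> lev x = j}" for j
    define J where "J = lev ` {x\<in>cube R. g x \<noteq> 0}"
    have finJ: "finite J" unfolding J_def using finite_cube by simp
    have supp: "{x\<in>cube R. h j x \<noteq> 0} = G j" for j
      unfolding h_def G_def using Ap by auto
    have sim: "sim_one R (h j)" for j
      unfolding sim_one_def
    proof (intro ballI impI)
      fix x assume x: "x \<in> cube R" "h j x \<noteq> 0"
      hence c: "g x \<noteq> 0" "lev x = j" unfolding h_def by (auto split: if_splits)
      have hx: "cmod (h j x) = cmod (g x) * 2 ^ j / A" unfolding h_def using x c Ap by (simp add: norm_mult norm_divide norm_power)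
      have l: "A / 2 ^ Suc j < cmod (g x)" "cmod (g x) \<le> A / 2 ^ j" using levp[OF x(1) c(1)] c by auto
      have "1/2 = (A / 2 ^ Suc j) * 2 ^ j / A" using Ap by simp
      also have "\<dots> \<le> cmod (g x) * 2 ^ j / A" using l Ap by (intro divide_right_mono mult_right_mono) auto
      finally have "1/2 \<le> cmod (h j x)" using hx by simp
      moreover have "cmod (g x) * 2 ^ j / A \<le> (A / 2 ^ j) * 2 ^ j / A"
        using l Ap by (intro divide_right_mono mult_right_mono) auto
      hence "cmod (h j x) \<le> 1" using hx Ap by simp
      ultimately show "1/2 \<le> cmod (h j x) \<and> cmod (h j x) \<le> 2" by simp
    qed
    have dec: "g x = (\<Sum>j\<in>J. of_real (A / 2 ^ j) * h j x)" if x: "x \<in> cube R" for x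
    proof (cases "g x = 0")
      case True thus ?thesis unfolding h_def by simp
    next
      case False
      have "(\<Sum>j\<in>J. of_real (A / 2 ^ j) * h j x) = (\<Sum>j\<in>J. if lev x = j then g x else 0)"
      proof (rule sum.cong[OF refl])
        fix j assume "j \<in> J"
        show "of_real (A / 2 ^ j) * h j x = (if lev x = j then g x else 0)"
          unfolding h_def using x False Ap
          by (auto simp: of_real_divide of_real_mult[symmetric] field_simps)
      qed
      also have "\<dots> = (if lev x \<in> J then g x else 0)" using finJ by (simp add: sum.delta)
      also have "\<dots> = g x" using x False unfolding J_def by auto
      finally show ?thesis by simp
    qed
    have cardG: "real (card (G j)) powr (1/r1) \<le> 2 powr (real (Suc j) * r / r1)" for j
    proof -
      have "real (card (G j)) * (A / 2 ^ Suc j) powr r = (\<Sum>x\<in>G j. (A / 2 ^ Suc j) powr r)" by simp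
      also have "\<dots> \<le> (\<Sum>x\<in>G j. cmod (g x) powr r)"
        using levp rp Ap unfolding G_def by (intro sum_mono powr_mono2) (auto intro: less_imp_le)
      also have "\<dots> \<le> (\<Sum>x\<in>cube R. cmod (g x) powr r)"
        using finite_cube unfolding G_def by (intro sum_mono2) auto
      also have "\<dots> = A powr r" unfolding A_def using Lr_pow[OF rp(1)] by simp
      finally have f1: "real (card (G j)) * (A / 2 ^ Suc j) powr r \<le> A powr r" .
      have p1: "(A / 2 ^ Suc j) powr r = A powr r / (2 ^ Suc j) powr r" using Ap by (intro powr_divide; auto)
      have p2: "((2::real) ^ Suc j) powr r = 2 powr (real (Suc j) * r)"
        by (subst powr_realpow[symmetric]) (simp_all add: powr_powr)
      have "real (card (G j)) * (A powr r / 2 powr (real (Suc j) * r)) \<le> A powr r"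
        using f1 unfolding p1 p2 .
      hence "real (card (G j)) \<le> 2 powr (real (Suc j) * r)"
        using Ap by (simp add: field_simps)
      hence "real (card (G j)) powr (1/r1) \<le> (2 powr (real (Suc j) * r)) powr (1/r1)"
        using rp by (intro powr_mono2) auto
      thus ?thesis by (simp add: powr_powr)
    qed
    have "L2P_norm R e g = L2P_norm R e (\<lambda>x. \<Sum>j\<in>J. of_real (A / 2 ^ j) * h j x)"
      using dec by (intro L2P_cong) auto
    also have "\<dots> \<le> (\<Sum>j\<in>J. cmod (of_real (A / 2 ^ j)) * L2P_norm R e (h j))"
      by (rule L2P_sum[OF finJ])
    also have "\<dots> \<le> (\<Sum>j\<in>J. (A / 2 ^ j) * (C0 * 2 powr (real (Suc j) * r / r1)))"
    proof (rule sum_mono)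
      fix j assume "j \<in> J"
      have "L2P_norm R e (h j) \<le> C0 * real (card (G j)) powr (1/r1)" using B[OF sim] supp by simp
      also have "\<dots> \<le> C0 * 2 powr (real (Suc j) * r / r1)" using cardG C0 by (intro mult_left_mono) auto
      finally have "L2P_norm R e (h j) \<le> C0 * 2 powr (real (Suc j) * r / r1)" .
      show "cmod (of_real (A / 2 ^ j)) * L2P_norm R e (h j) \<le> (A / 2 ^ j) * (C0 * 2 powr (real (Suc j) * r / r1))"
      proof -
        have nA: "cmod (complex_of_real (A / 2 ^ j)) = A / 2 ^ j" unfolding norm_of_real using Ap by simp
        show ?thesis unfolding nA using \<open>L2P_norm R e (h j) \<le> C0 * 2 powr (real (Suc j) * r / r1)\<close> Ap
          by (intro mult_left_mono) auto
      qed
    qed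
    also have "\<dots> = (\<Sum>j\<in>J. A * C0 * 2 powr (r / r1) * q ^ j)"
    proof (rule sum.cong[OF refl])
      fix j assume "j \<in> J"
      have "q ^ j = 2 powr ((r/r1 - 1) * real j)" unfolding q_def
        by (simp add: powr_realpow[symmetric] powr_powr)
      also have "\<dots> = 2 powr (real j * r / r1) / 2 ^ j"
        by (simp add: powr_diff powr_realpow algebra_simps)
      finally have qj: "q ^ j = 2 powr (real j * r / r1) / 2 ^ j" .
      have "2 powr (real (Suc j) * r / r1) = 2 powr (r / r1) * 2 powr (real j * r / r1)"
        by (simp add: powr_add[symmetric] algebra_simps add_divide_distrib)
      thus "(A / 2 ^ j) * (C0 * 2 powr (real (Suc j) * r / r1)) = A * C0 * 2 powr (r / r1) * q ^ j"
        unfolding qj by simp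
    qed
    also have "\<dots> = A * C0 * 2 powr (r / r1) * (\<Sum>j\<in>J. q ^ j)" by (simp add: sum_distrib_left)
    also have "\<dots> \<le> A * C0 * 2 powr (r / r1) * (1 / (1 - q))"
      using geo_bound[OF q finJ] Ap C0 by (intro mult_left_mono) auto
    finally show ?thesis unfolding A_def q_def by (simp add: mult_ac)
  qed
qed


lemma card_cube: "card (cube R) = N * N * N"
  unfolding cube_def by (simp add: card_cartesian_product)

lemma L2P_lower: "real N * real N \<le> L2P_norm R e (\<lambda>x. if x \<in> cube R then 1 else 0)"
proof -
  define g :: "nat \<times> nat \<times> nat \<Rightarrow> complex" where "g = (\<lambda>x. if x \<in> cube R then 1 else 0)"
  have z: "(\<zero>, \<zero>, \<zero>) \<in> parab R" unfolding parab_def by force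
  have "fourier R e g (\<zero>, \<zero>, \<zero>) = (\<Sum>x\<in>cube R. 1)"
  proof (unfold fourier_def, rule sum.cong[OF refl])
    fix x assume x: "x \<in> cube R"
    have "dot3 R x (\<zero>, \<zero>, \<zero>) = \<zero>" using x unfolding cube_def dot3_def by (auto split: prod.splits)
    thus "g x * e (\<ominus> dot3 R x (\<zero>, \<zero>, \<zero>)) = 1" using x e0 g_def by simp
  qed
  hence F0: "cmod (fourier R e g (\<zero>, \<zero>, \<zero>)) = real N * real N * real N" using card_cube by (simp add: norm_mult)
  have "(real N * real N * real N)\<^sup>2 \<le> (\<Sum>\<xi>\<in>parab R. (cmod (fourier R e g \<xi>))\<^sup>2)"
    unfolding F0[symmetric] using z finite_parab by (intro member_le_sum) auto
  hence "(real N * real N * real N)\<^sup>2 / (real N)\<^sup>2 \<le> (\<Sum>\<xi>\<in>parab R. (cmod (fourier R e g \<xi>))\<^sup>2) / (real N)\<^sup>2"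
    by (intro divide_right_mono) auto
  moreover have "(real N * real N * real N)\<^sup>2 / (real N)\<^sup>2 = (real N * real N)\<^sup>2"
    using N_pos by (simp add: power2_eq_square)
  ultimately have "real N * real N \<le> sqrt ((\<Sum>\<xi>\<in>parab R. (cmod (fourier R e g \<xi>))\<^sup>2) / (real N)\<^sup>2)"
    by (metis real_le_rsqrt)
  thus ?thesis unfolding L2P_norm_def g_def by simp
qed

lemma Lr_ind: assumes "r0 > 0" shows "Lr_norm R r0 (\<lambda>x. if x \<in> cube R then 1 else 0) = (real N * real N * real N) powr (1/r0)"
proof -
  have "(\<Sum>x\<in>cube R. cmod (if x \<in> cube R then (1::complex) else 0) powr r0) = (\<Sum>x\<in>cube R. 1)"
    by (intro sum.cong) auto
  thus ?thesis unfolding Lr_norm_def using card_cube by simp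
qed

lemma sim_ind: "sim_one R (\<lambda>x. if x \<in> cube R then 1 else 0)"
  unfolding sim_one_def by simp

lemma L2P_triv: assumes "r > 0" shows "L2P_norm R e g \<le> 2 * (real N * real N * real N) * Lr_norm R r g"
proof -
  define s where "s = (\<Sum>x\<in>cube R. cmod (g x))"
  have s0: "0 \<le> s" unfolding s_def by (simp add: sum_nonneg)
  have "(\<Sum>x\<in>cube R. (cmod (g x))\<^sup>2) \<le> (\<Sum>x\<in>cube R. cmod (g x) * s)"
  proof (rule sum_mono)
    fix x assume "x \<in> cube R"
    hence "cmod (g x) \<le> s" unfolding s_def using finite_cube by (intro member_le_sum) auto
    thus "(cmod (g x))\<^sup>2 \<le> cmod (g x) * s" by (simp add: power2_eq_square mult_left_mono)
  qed
  also have "\<dots> = s\<^sup>2" unfolding s_def by (simp add: sum_distrib_right power2_eq_square)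
  finally have a: "(\<Sum>x\<in>cube R. (cmod (g x))\<^sup>2) \<le> s\<^sup>2" .
  have "s\<^sup>2 / real N \<le> s\<^sup>2" using N_pos by (simp add: divide_le_eq) (simp add: mult_le_cancel_left1)
  moreover have "(L2P_norm R e g)\<^sup>2 \<le> (\<Sum>x\<in>cube R. (cmod (g x))\<^sup>2) + s\<^sup>2 / real N"
    using L2P_sq_bound[of g] unfolding s_def .
  moreover have "(2 * s)\<^sup>2 = 4 * s\<^sup>2" by (simp add: power2_eq_square)
  moreover have "0 \<le> s\<^sup>2" by simp
  ultimately have "(L2P_norm R e g)\<^sup>2 \<le> (2 * s)\<^sup>2" using a by linarith
  hence l: "L2P_norm R e g \<le> 2 * s" by (rule power2_le_imp_le) (use s0 in simp)
  have "s \<le> (\<Sum>x\<in>cube R. Lr_norm R r g)" unfolding s_def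
    using Lr_pt[OF assms finite_cube] by (intro sum_mono) auto
  also have "\<dots> = (real N * real N * real N) * Lr_norm R r g" using card_cube by simp
  finally show ?thesis using l by simp
qed

end

lemma e0_cases:
  assumes "odd_char_field_no_sqrt_m1 R" "nontriv_add_char R e"
  shows "e \<zero>\<^bsub>R\<^esub> = 0 \<or> fchar R e"
proof -
  interpret field R using assms(1) unfolding odd_char_field_no_sqrt_m1_def by simp
  have hom: "\<And>a b. a \<in> carrier R \<Longrightarrow> b \<in> carrier R \<Longrightarrow> e (a \<oplus>\<^bsub>R\<^esub> b) = e a * e b"
    using assms(2) unfolding nontriv_add_char_def by blast
  have "e \<zero>\<^bsub>R\<^esub> = e \<zero>\<^bsub>R\<^esub> * e \<zero>\<^bsub>R\<^esub>" using hom[of "\<zero>\<^bsub>R\<^esub>" "\<zero>\<^bsub>R\<^esub>"] by simp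
  hence "e \<zero>\<^bsub>R\<^esub> = 0 \<or> e \<zero>\<^bsub>R\<^esub> = 1" by (metis mult_cancel_left1)
  moreover have "fchar R e" if "e \<zero>\<^bsub>R\<^esub> = 1"
    using assms that unfolding odd_char_field_no_sqrt_m1_def nontriv_add_char_def
    by unfold_locales auto
  ultimately show ?thesis by blast
qed

lemma L2P_zero_case:
  assumes "odd_char_field_no_sqrt_m1 R" "nontriv_add_char R e" "e \<zero>\<^bsub>R\<^esub> = 0"
  shows "L2P_norm R e g = 0"
  using assms unfolding odd_char_field_no_sqrt_m1_def nontriv_add_char_def
  by (intro L2P_zero_char) auto

theorem lemma2p2:
  fixes r0 :: real and E :: "nat ring \<Rightarrow> nat \<Rightarrow> complex"
  assumes "r0 \<ge> 1"
    and "\<And>R. odd_char_field_no_sqrt_m1 R \<Longrightarrow> nontriv_add_char R (E R)"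
    and "\<forall>\<epsilon>>0. \<exists>c. \<forall>R. odd_char_field_no_sqrt_m1 R \<longrightarrow>
           (\<forall>g. sim_one R g \<longrightarrow>
              L2P_norm R (E R) g \<le> c * real (card (carrier R)) powr \<epsilon> * Lr_norm R r0 g)"
  shows "\<forall>r. 1 \<le> r \<and> r < r0 \<longrightarrow> (\<exists>C. \<forall>R. odd_char_field_no_sqrt_m1 R \<longrightarrow>
           (\<forall>g. L2P_norm R (E R) g \<le> C * Lr_norm R r g))"
proof (intro allI impI)
  fix r assume r: "1 \<le> r \<and> r < r0"
  show "\<exists>C. \<forall>R. odd_char_field_no_sqrt_m1 R \<longrightarrow> (\<forall>g. L2P_norm R (E R) g \<le> C * Lr_norm R r g)"
  proof (cases "r0 > 3/2")
    case True
    define \<delta> where "\<delta> = 1 - 3 / (2 * r0)"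
    have \<delta>: "\<delta> > 0" unfolding \<delta>_def using True by (simp add: field_simps)
    obtain c where c: "\<forall>R. odd_char_field_no_sqrt_m1 R \<longrightarrow> (\<forall>g. sim_one R g \<longrightarrow>
              L2P_norm R (E R) g \<le> c * real (card (carrier R)) powr \<delta> * Lr_norm R r0 g)"
      using assms(3) \<delta> by blast
    define K where "K = c powr (1 / \<delta>)"
    have K0: "0 \<le> K" unfolding K_def by simp
    show ?thesis
    proof (intro exI allI impI)
      fix R g assume R: "odd_char_field_no_sqrt_m1 R"
      from e0_cases[OF R assms(2)[OF R]]
      show "L2P_norm R (E R) g \<le> 2 * (K * K * K) * Lr_norm R r g"
      proof
        assume "E R \<zero>\<^bsub>R\<^esub> = 0"
        hence "L2P_norm R (E R) g = 0" using L2P_zero_case R assms(2) by blast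
        thus ?thesis using K0 Lr_nonneg by simp
      next
        assume "fchar R (E R)"
        then interpret fchar R "E R" .
        define n where "n = real N"
        have n1: "n \<ge> 1" unfolding n_def using N_pos by simp
        have "n * n \<le> c * n powr \<delta> * (n * n * n) powr (1/r0)"
          using L2P_lower c R sim_ind Lr_ind[of r0] assms(1) unfolding n_def
          by (metis (no_types, lifting) order_trans less_le_trans zero_less_one)
        also have "(n * n * n) powr (1/r0) = n powr (3 / r0)"
        proof -
          have "n * n * n = n powr 3" using n1 by (simp add: powr_numeral power3_eq_cube)
          thus ?thesis by (simp add: powr_powr)
        qed
        also have "c * n powr \<delta> * n powr (3 / r0) = c * n powr (\<delta> + 3 / r0)" by (simp add: powr_add)
        finally have i1: "n * n \<le> c * n powr (\<delta> + 3 / r0)" .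
        have "n * n = n powr 2" using n1 by (simp add: powr_numeral power2_eq_square)
        also have "n powr 2 = n powr \<delta> * n powr (\<delta> + 3 / r0)"
          unfolding \<delta>_def using n1 by (simp add: powr_add[symmetric])
        finally have "n powr \<delta> * n powr (\<delta> + 3 / r0) \<le> c * n powr (\<delta> + 3 / r0)" using i1 by simp
        hence nd: "n powr \<delta> \<le> c" using n1 by simp
        have "n = (n powr \<delta>) powr (1 / \<delta>)" using \<delta> n1 by (simp add: powr_powr)
        also have "\<dots> \<le> K" unfolding K_def using nd \<delta> by (intro powr_mono2) auto
        finally have nK: "n \<le> K" .
        have "L2P_norm R (E R) g \<le> 2 * (n * n * n) * Lr_norm R r g"
          unfolding n_def using L2P_triv r by simp
        also have "\<dots> \<le> 2 * (K * K * K) * Lr_norm R r g"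
          using nK n1 by (intro mult_right_mono mult_left_mono mult_mono) (auto simp: Lr_nonneg)
        finally show ?thesis .
      qed
    qed
  next
    case False
    define r1 where "r1 = (r + r0) / 2"
    have r1: "1 \<le> r1" "r1 \<le> 2" "r1 < r0" "r < r1" using r False unfolding r1_def by auto
    define \<epsilon> where "\<epsilon> = 1/r1 - 1/r0"
    have \<epsilon>: "\<epsilon> > 0" unfolding \<epsilon>_def using r1 by (simp add: frac_less2)
    obtain c where c: "\<forall>R. odd_char_field_no_sqrt_m1 R \<longrightarrow> (\<forall>g. sim_one R g \<longrightarrow>
              L2P_norm R (E R) g \<le> c * real (card (carrier R)) powr \<epsilon> * Lr_norm R r0 g)"
      using assms(3) \<epsilon> by blast
    define C0 where "C0 = max 3 (2 * \<bar>c\<bar>)"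
    define C where "C = C0 * 2 powr (r/r1) / (1 - 2 powr (r/r1 - 1))"
    have "r / r1 < 1" using r1 r by simp
    hence q: "2 powr (r/r1 - 1) < 1" by (auto intro!: powr_less_one)
    have C0: "0 \<le> C0" unfolding C0_def by simp
    have Cnn: "0 \<le> C" unfolding C_def using q C0 by simp
    show ?thesis
    proof (intro exI allI impI)
      fix R g assume R: "odd_char_field_no_sqrt_m1 R"
      from e0_cases[OF R assms(2)[OF R]]
      show "L2P_norm R (E R) g \<le> C * Lr_norm R r g"
      proof
        assume "E R \<zero>\<^bsub>R\<^esub> = 0"
        hence "L2P_norm R (E R) g = 0" using L2P_zero_case R assms(2) by blast
        thus ?thesis using Cnn Lr_nonneg by simp
      next
        assume "fchar R (E R)"
        then interpret fchar R "E R" .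
        have B: "L2P_norm R (E R) h \<le> C0 * real (card {x\<in>cube R. h x \<noteq> 0}) powr (1/r1)"
          if "sim_one R h" for h
          unfolding C0_def
          by (rule restricted_bound[OF r1(1-3) _ that]) (use c R \<epsilon>_def in blast)
        show ?thesis unfolding C_def
          by (rule decomposition[OF _ r1(4) C0 B]) (use r in auto)
      qed
    qed
  qed
qed

end
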